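(* Let $\rho$ be a smooth function on an open interval $I$ with $\rho(t)\neq0$ for all $t\in I$, and let $\mu,\sigma$ be nonzero constants. Let $U(r,y),V(r,y)$ be smooth functions on $\mathbb{R}^2$ and define, for $(x,y,t)\in\mathbb{R}^2\times I$, $$u(x,y,t)=\rho(t)^{1/3}\,U\big(\rho(t)^{1/3}x,\,y\big),\qquad v(x,y,t)=\rho(t)^{2/3}\,V\big(\rho(t)^{1/3}x,\,y\big)-\frac{\rho'(t)}{9\mu}x,$$ where $\rho^{1/3}$ denotes the real cube root. Then $(u,v)$ solves $$\rho(t)u_t+3\mu(uv)_x+\sigma u_{xxx}=0,\qquad u_x=v_y$$ if and only if $(U,V)$ solves $$3\mu(UV)_r+\sigma U_{rrr}=0,\qquad U_r-V_y=0.$$ *)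

theory Defs
  imports "HOL-Analysis.Analysis"
begin

definition pdir :: "'a::real_normed_vector \<Rightarrow> ('a \<Rightarrow> real) \<Rightarrow> 'a \<Rightarrow> real" where
  "pdir i f x = deriv (\<lambda>t. f (x + t *\<^sub>R i)) 0"

fun Ck :: "nat \<Rightarrow> 'a::euclidean_space set \<Rightarrow> ('a \<Rightarrow> real) \<Rightarrow> bool" where
  "Ck 0 S f = continuous_on S f"
| "Ck (Suc k) S f =
     (continuous_on S f \<and>
      (\<forall>i\<in>Basis. \<forall>x\<in>S. (\<lambda>t. f (x + t *\<^sub>R i)) differentiable (at 0)) \<and>
      (\<forall>i\<in>Basis. Ck k S (pdir i f)))"

definition smooth_on :: "'a::euclidean_space set \<Rightarrow> ('a \<Rightarrow> real) \<Rightarrow> bool" where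
  "smooth_on S f \<longleftrightarrow> (\<forall>k. Ck k S f)"

end

theory Submission imports Defs begin

lemma deriv_shift0: "deriv (\<lambda>t. g (a + t)) 0 = deriv g (a::real)"
proof -
  have "\<And>D. ((\<lambda>t. g (a + t)) has_field_derivative D) (at 0) = (g has_field_derivative D) (at a)"
    using DERIV_shift[of g _ 0 a] by (simp add: add.commute)
  then show ?thesis unfolding deriv_def by simp
qed

lemma Ck_fst:
  fixes F :: "real \<Rightarrow> real \<Rightarrow> real"
  assumes "Ck (Suc k) UNIV (\<lambda>p. F (fst p) (snd p))"
  shows "\<And>r y. ((\<lambda>r. F r y) has_real_derivative deriv (\<lambda>r. F r y) r) (at r)"
    and "Ck k UNIV (\<lambda>p. deriv (\<lambda>r. F r (snd p)) (fst p))"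
proof -
  have B: "((1::real),(0::real)) \<in> Basis" by (simp add: Basis_prod_def)
  fix r y
  have "(\<lambda>t. F (fst ((r,y) + t *\<^sub>R (1,0))) (snd ((r,y) + t *\<^sub>R (1,0)))) differentiable (at 0)"
    using conjunct1[OF conjunct2[OF assms[unfolded Ck.simps]], rule_format, OF B UNIV_I] .
  then have "(\<lambda>t. F (r + t) y) differentiable (at 0)" by simp
  then have "((\<lambda>t. F (r + t) y) has_real_derivative deriv (\<lambda>t. F (r + t) y) 0) (at 0)"
    using DERIV_deriv_iff_real_differentiable by blast
  then show "((\<lambda>r. F r y) has_real_derivative deriv (\<lambda>r. F r y) r) (at r)"
    using DERIV_shift[of "\<lambda>r. F r y" _ 0 r] deriv_shift0[of "\<lambda>r. F r y" r]
    by (simp add: add.commute)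
next
  have B: "((1::real),(0::real)) \<in> Basis" by (simp add: Basis_prod_def)
  have e: "pdir (1,0) (\<lambda>p. F (fst p) (snd p)) = (\<lambda>p. deriv (\<lambda>r. F r (snd p)) (fst p))"
    by (rule ext) (simp add: pdir_def deriv_shift0[of "\<lambda>r. F r _"])
  show "Ck k UNIV (\<lambda>p. deriv (\<lambda>r. F r (snd p)) (fst p))"
    using assms B e by force
qed

lemma Ck_snd:
  fixes F :: "real \<Rightarrow> real \<Rightarrow> real"
  assumes "Ck (Suc k) UNIV (\<lambda>p. F (fst p) (snd p))"
  shows "\<And>r y. ((\<lambda>y. F r y) has_real_derivative deriv (\<lambda>y. F r y) y) (at y)"
proof -
  have B: "((0::real),(1::real)) \<in> Basis" by (simp add: Basis_prod_def)
  fix r y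
  have "(\<lambda>t. F (fst ((r,y) + t *\<^sub>R (0,1))) (snd ((r,y) + t *\<^sub>R (0,1)))) differentiable (at 0)"
    using conjunct1[OF conjunct2[OF assms[unfolded Ck.simps]], rule_format, OF B UNIV_I] .
  then have "(\<lambda>t. F r (y + t)) differentiable (at 0)" by simp
  then have "((\<lambda>t. F r (y + t)) has_real_derivative deriv (\<lambda>t. F r (y + t)) 0) (at 0)"
    using DERIV_deriv_iff_real_differentiable by blast
  then show "((\<lambda>y. F r y) has_real_derivative deriv (\<lambda>y. F r y) y) (at y)"
    using DERIV_shift[of "\<lambda>y. F r y" _ 0 y] deriv_shift0[of "\<lambda>y. F r y" y]
    by (simp add: add.commute)
qed

lemma Ck_real:
  assumes "Ck (Suc k) I (\<rho>::real\<Rightarrow>real)" "t \<in> I"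
  shows "(\<rho> has_real_derivative deriv \<rho> t) (at t)"
proof -
  have "(\<lambda>s. \<rho> (t + s)) differentiable (at 0)"
    using assms by auto
  then have "((\<lambda>s. \<rho> (t + s)) has_real_derivative deriv (\<lambda>s. \<rho> (t + s)) 0) (at 0)"
    using DERIV_deriv_iff_real_differentiable by blast
  then show ?thesis
    using DERIV_shift[of \<rho> _ 0 t] deriv_shift0[of \<rho> t]
    by (simp add: add.commute)
qed

lemma main_aux:
  fixes \<rho> :: "real \<Rightarrow> real" and \<mu> \<sigma> :: real
    and U V :: "real \<Rightarrow> real \<Rightarrow> real"
  assumes rho_d: "(\<rho> has_real_derivative \<rho>') (at t)"
    and rnz: "\<rho> t \<noteq> 0" and mu: "\<mu> \<noteq> 0"
    and dU: "\<And>r y. ((\<lambda>r. U r y) has_real_derivative U1 r y) (at r)"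
    and dU1: "\<And>r y. ((\<lambda>r. U1 r y) has_real_derivative U2 r y) (at r)"
    and dU2: "\<And>r y. ((\<lambda>r. U2 r y) has_real_derivative U3 r y) (at r)"
    and dV: "\<And>r y. ((\<lambda>r. V r y) has_real_derivative V1 r y) (at r)"
    and dVy: "\<And>r y. ((\<lambda>y. V r y) has_real_derivative Vy r y) (at y)"
  defines "c \<equiv> root 3 (\<rho> t)"
  shows "\<rho> t * deriv (\<lambda>s. root 3 (\<rho> s) * U (root 3 (\<rho> s) * x) y) t
          + 3 * \<mu> * deriv (\<lambda>x'. (root 3 (\<rho> t) * U (root 3 (\<rho> t) * x') y) *
               ((root 3 (\<rho> t))\<^sup>2 * V (root 3 (\<rho> t) * x') y - \<rho>' / (9 * \<mu>) * x')) x
          + \<sigma> * deriv (\<lambda>a. deriv (\<lambda>b. deriv (\<lambda>x'. root 3 (\<rho> t) * U (root 3 (\<rho> t) * x') y) b) a) x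
        = c^4 * (3 * \<mu> * (U1 (c*x) y * V (c*x) y + U (c*x) y * V1 (c*x) y) + \<sigma> * U3 (c*x) y)"
    and "deriv (\<lambda>x'. root 3 (\<rho> t) * U (root 3 (\<rho> t) * x') y) x = c^2 * U1 (c*x) y"
    and "deriv (\<lambda>y'. (root 3 (\<rho> t))\<^sup>2 * V (root 3 (\<rho> t) * x) y' - \<rho>' / (9 * \<mu>) * x) y = c^2 * Vy (c*x) y"
proof -
  have cnz: "c \<noteq> 0" using rnz by (simp add: c_def)
  have c3: "c^3 = \<rho> t" unfolding c_def by (simp add: odd_real_root_pow)
  define C' where "C' = inverse (3 * c^2) * \<rho>'"
  have hroot: "(root 3 has_real_derivative inverse (3 * c^2)) (at (\<rho> t))"
    by (rule DERIV_real_root_generic) (use rnz in \<open>auto simp: c_def\<close>)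
  have hC: "((\<lambda>s. root 3 (\<rho> s)) has_real_derivative C') (at t)"
    unfolding C'_def using DERIV_chain2[OF hroot rho_d] .
  have hUt: "((\<lambda>s. U (root 3 (\<rho> s) * x) y) has_real_derivative U1 (c*x) y * (C' * x)) (at t)"
  proof -
    have dUc: "((\<lambda>r. U r y) has_real_derivative U1 (c*x) y) (at ((\<lambda>s. root 3 (\<rho> s) * x) t))"
      using dU by (simp add: c_def)
    show ?thesis using DERIV_chain2[where g="\<lambda>s. root 3 (\<rho> s) * x", OF dUc DERIV_cmult_right[OF hC, of x]]
      by simp
  qed
  have d1: "deriv (\<lambda>s. root 3 (\<rho> s) * U (root 3 (\<rho> s) * x) y) t
      = C' * U (c*x) y + c * (U1 (c*x) y * (C' * x))"
    by (rule DERIV_imp_deriv) (use DERIV_mult[OF hC hUt] in \<open>simp add: c_def algebra_simps\<close>)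
  have gen: "\<And>G G1 z. (\<And>r. ((\<lambda>r. G r y) has_real_derivative G1 r y) (at r)) \<Longrightarrow>
      ((\<lambda>x'. G (c * x') y) has_real_derivative G1 (c*z) y * c) (at z)"
  proof -
    fix G G1 z assume h: "\<And>r. ((\<lambda>r. G r y) has_real_derivative G1 r (y::real)) (at r)"
    have a: "((\<lambda>r. G r y) has_real_derivative G1 (c*z) y) (at ((\<lambda>x'. c * x') z))" using h by simp
    have b: "((\<lambda>x'. c * x') has_real_derivative c) (at z)" by (auto intro!: derivative_eq_intros)
    show "((\<lambda>x'. G (c * x') y) has_real_derivative G1 (c*z) y * c) (at z)"
      using DERIV_chain2[where g="\<lambda>x'. c * x'", OF a b] by simp
  qed
  have dd1: "deriv (\<lambda>x'. c * U (c * x') y) = (\<lambda>b. c^2 * U1 (c*b) y)"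
  proof
    fix b show "deriv (\<lambda>x'. c * U (c * x') y) b = c^2 * U1 (c*b) y"
      by (rule DERIV_imp_deriv) (use DERIV_cmult[OF gen[of U U1 b], of c] dU in \<open>simp add: power2_eq_square algebra_simps\<close>)
  qed
  have dd2: "deriv (\<lambda>b. c^2 * U1 (c*b) y) = (\<lambda>b. c^3 * U2 (c*b) y)"
  proof
    fix b show "deriv (\<lambda>b. c^2 * U1 (c*b) y) b = c^3 * U2 (c*b) y"
      by (rule DERIV_imp_deriv) (use DERIV_cmult[OF gen[of U1 U2 b], of "c^2"] dU1 in \<open>simp add: power3_eq_cube power2_eq_square algebra_simps\<close>)
  qed
  have dd3: "deriv (\<lambda>b. c^3 * U2 (c*b) y) x = c^4 * U3 (c*x) y"
    by (rule DERIV_imp_deriv) (use DERIV_cmult[OF gen[of U2 U3 x], of "c^3"] dU2 in \<open>simp add: power3_eq_cube algebra_simps numeral_eq_Suc\<close>)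
  have hv: "((\<lambda>x'. c^2 * V (c * x') y - \<rho>' / (9 * \<mu>) * x') has_real_derivative c^2 * (V1 (c*x) y * c) - \<rho>' / (9 * \<mu>)) (at x)"
    by (rule derivative_eq_intros DERIV_cmult gen[of V V1 x] dV)+ (auto intro!: derivative_eq_intros)
  have hu: "((\<lambda>x'. c * U (c * x') y) has_real_derivative c * (U1 (c*x) y * c)) (at x)"
    by (rule DERIV_cmult gen[of U U1 x] dU)+
  have d2: "deriv (\<lambda>x'. (c * U (c * x') y) * (c^2 * V (c * x') y - \<rho>' / (9 * \<mu>) * x')) x
     = c * (U1 (c*x) y * c) * (c^2 * V (c * x) y - \<rho>' / (9 * \<mu>) * x) + (c^2 * (V1 (c*x) y * c) - \<rho>' / (9 * \<mu>)) * (c * U (c * x) y)"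
    by (rule DERIV_imp_deriv) (rule DERIV_mult[OF hu hv])
  show "\<rho> t * deriv (\<lambda>s. root 3 (\<rho> s) * U (root 3 (\<rho> s) * x) y) t
          + 3 * \<mu> * deriv (\<lambda>x'. (root 3 (\<rho> t) * U (root 3 (\<rho> t) * x') y) *
               ((root 3 (\<rho> t))\<^sup>2 * V (root 3 (\<rho> t) * x') y - \<rho>' / (9 * \<mu>) * x')) x
          + \<sigma> * deriv (\<lambda>a. deriv (\<lambda>b. deriv (\<lambda>x'. root 3 (\<rho> t) * U (root 3 (\<rho> t) * x') y) b) a) x
        = c^4 * (3 * \<mu> * (U1 (c*x) y * V (c*x) y + U (c*x) y * V1 (c*x) y) + \<sigma> * U3 (c*x) y)"
    unfolding d1 d2[unfolded c_def] dd1[unfolded c_def] dd2[unfolded c_def] dd3[unfolded c_def]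
    unfolding c_def[symmetric]
    unfolding c3[symmetric] C'_def
    using cnz mu by (simp add: field_simps power2_eq_square power3_eq_cube numeral_eq_Suc)
  show "deriv (\<lambda>x'. root 3 (\<rho> t) * U (root 3 (\<rho> t) * x') y) x = c^2 * U1 (c*x) y"
    using dd1 by (simp add: c_def)
  show "deriv (\<lambda>y'. (root 3 (\<rho> t))\<^sup>2 * V (root 3 (\<rho> t) * x) y' - \<rho>' / (9 * \<mu>) * x) y = c^2 * Vy (c*x) y"
    by (rule DERIV_imp_deriv) (use dVy[of "c*x" y] in \<open>auto simp: c_def intro!: derivative_eq_intros\<close>)
qed

theorem mainTheorem3:
  fixes \<rho> :: "real \<Rightarrow> real" and I :: "real set" and \<mu> \<sigma> :: real
    and U V :: "real \<Rightarrow> real \<Rightarrow> real"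
    and u v :: "real \<Rightarrow> real \<Rightarrow> real \<Rightarrow> real"
  assumes I: "open I" "is_interval I" "I \<noteq> {}"
    and rho_smooth: "smooth_on I \<rho>"
    and rho_nz: "\<forall>t\<in>I. \<rho> t \<noteq> 0"
    and mu: "\<mu> \<noteq> 0" and sigma: "\<sigma> \<noteq> 0"
    and U_smooth: "smooth_on UNIV (\<lambda>p. U (fst p) (snd p))"
    and V_smooth: "smooth_on UNIV (\<lambda>p. V (fst p) (snd p))"
    and u_def: "\<And>x y t. u x y t = root 3 (\<rho> t) * U (root 3 (\<rho> t) * x) y"
    and v_def: "\<And>x y t. v x y t = (root 3 (\<rho> t))\<^sup>2 * V (root 3 (\<rho> t) * x) y
                                   - deriv \<rho> t / (9 * \<mu>) * x"
  shows "(\<forall>x y. \<forall>t\<in>I.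
            \<rho> t * deriv (\<lambda>s. u x y s) t
              + 3 * \<mu> * deriv (\<lambda>x'. u x' y t * v x' y t) x
              + \<sigma> * deriv (\<lambda>a. deriv (\<lambda>b. deriv (\<lambda>c. u c y t) b) a) x = 0
            \<and> deriv (\<lambda>x'. u x' y t) x = deriv (\<lambda>y'. v x y' t) y)
     \<longleftrightarrow>
         (\<forall>r y.
            3 * \<mu> * deriv (\<lambda>r'. U r' y * V r' y) r
              + \<sigma> * deriv (\<lambda>a. deriv (\<lambda>b. deriv (\<lambda>c. U c y) b) a) r = 0
            \<and> deriv (\<lambda>r'. U r' y) r - deriv (\<lambda>y'. V r y') y = 0)"
proof -
  define U1 where "U1 = (\<lambda>r y. deriv (\<lambda>r. U r y) r)"
  define U2 where "U2 = (\<lambda>r y. deriv (\<lambda>r. U1 r y) r)"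
  define U3 where "U3 = (\<lambda>r y. deriv (\<lambda>r. U2 r y) r)"
  define V1 where "V1 = (\<lambda>r y. deriv (\<lambda>r. V r y) r)"
  define Vy where "Vy = (\<lambda>r y. deriv (\<lambda>y. V r y) y)"
  have cU: "Ck (Suc (Suc (Suc (Suc 0)))) UNIV (\<lambda>p. U (fst p) (snd p))"
    using U_smooth unfolding smooth_on_def by blast
  have cV: "Ck (Suc 0) UNIV (\<lambda>p. V (fst p) (snd p))"
    using V_smooth unfolding smooth_on_def by blast
  have cR: "Ck (Suc 0) I \<rho>"
    using rho_smooth unfolding smooth_on_def by blast
  have dU: "\<And>r y. ((\<lambda>r. U r y) has_real_derivative U1 r y) (at r)"
    using Ck_fst(1)[OF cU] unfolding U1_def .
  have cU1: "Ck (Suc (Suc (Suc 0))) UNIV (\<lambda>p. U1 (fst p) (snd p))"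
    using Ck_fst(2)[OF cU] unfolding U1_def .
  have dU1: "\<And>r y. ((\<lambda>r. U1 r y) has_real_derivative U2 r y) (at r)"
    using Ck_fst(1)[OF cU1] unfolding U2_def .
  have cU2: "Ck (Suc (Suc 0)) UNIV (\<lambda>p. U2 (fst p) (snd p))"
    using Ck_fst(2)[OF cU1] unfolding U2_def .
  have dU2: "\<And>r y. ((\<lambda>r. U2 r y) has_real_derivative U3 r y) (at r)"
    using Ck_fst(1)[OF cU2] unfolding U3_def .
  have dV: "\<And>r y. ((\<lambda>r. V r y) has_real_derivative V1 r y) (at r)"
    using Ck_fst(1)[OF cV] unfolding V1_def .
  have dVy: "\<And>r y. ((\<lambda>y. V r y) has_real_derivative Vy r y) (at y)"
    using Ck_snd[OF cV] unfolding Vy_def .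
  have dUV: "\<And>r y. deriv (\<lambda>r'. U r' y * V r' y) r = U1 r y * V r y + U r y * V1 r y"
    by (rule DERIV_imp_deriv) (use DERIV_mult[OF dU dV] in \<open>simp add: algebra_simps\<close>)
  have U1e: "\<And>r y. deriv (\<lambda>r'. U r' y) r = U1 r y" by (simp add: U1_def)
  have Vye: "\<And>r y. deriv (\<lambda>y'. V r y') y = Vy r y" by (simp add: Vy_def)
  have U3e: "\<And>r y. deriv (\<lambda>a. deriv (\<lambda>b. deriv (\<lambda>c. U c y) b) a) r = U3 r y"
    by (simp add: U1_def U2_def U3_def)
  have key: "\<And>x y t. t \<in> I \<Longrightarrow>
      (\<rho> t * deriv (\<lambda>s. u x y s) t
              + 3 * \<mu> * deriv (\<lambda>x'. u x' y t * v x' y t) x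
              + \<sigma> * deriv (\<lambda>a. deriv (\<lambda>b. deriv (\<lambda>c. u c y t) b) a) x = 0
            \<and> deriv (\<lambda>x'. u x' y t) x = deriv (\<lambda>y'. v x y' t) y)
      \<longleftrightarrow> (3 * \<mu> * (U1 (root 3 (\<rho> t)*x) y * V (root 3 (\<rho> t)*x) y + U (root 3 (\<rho> t)*x) y * V1 (root 3 (\<rho> t)*x) y) + \<sigma> * U3 (root 3 (\<rho> t)*x) y = 0
           \<and> U1 (root 3 (\<rho> t)*x) y - Vy (root 3 (\<rho> t)*x) y = 0)"
  proof -
    fix x y t assume t: "t \<in> I"
    have rn: "\<rho> t \<noteq> 0" using rho_nz t by blast
    have cn: "root 3 (\<rho> t) \<noteq> 0" using rn by simp
    have e1: "\<rho> t * deriv (\<lambda>s. u x y s) t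
              + 3 * \<mu> * deriv (\<lambda>x'. u x' y t * v x' y t) x
              + \<sigma> * deriv (\<lambda>a. deriv (\<lambda>b. deriv (\<lambda>c. u c y t) b) a) x
       = (root 3 (\<rho> t))^4 * (3 * \<mu> * (U1 (root 3 (\<rho> t)*x) y * V (root 3 (\<rho> t)*x) y + U (root 3 (\<rho> t)*x) y * V1 (root 3 (\<rho> t)*x) y) + \<sigma> * U3 (root 3 (\<rho> t)*x) y)"
      unfolding u_def v_def using dU dU1 dU2 dV dVy by (rule main_aux(1)[OF Ck_real[OF cR t] rn mu])
    have e2: "deriv (\<lambda>x'. u x' y t) x = (root 3 (\<rho> t))^2 * U1 (root 3 (\<rho> t)*x) y"
      unfolding u_def using dU dU1 dU2 dV dVy by (rule main_aux(2)[OF Ck_real[OF cR t] rn mu])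
    have e3: "deriv (\<lambda>y'. v x y' t) y = (root 3 (\<rho> t))^2 * Vy (root 3 (\<rho> t)*x) y"
      unfolding v_def using dU dU1 dU2 dV dVy by (rule main_aux(3)[OF Ck_real[OF cR t] rn mu])
    show "?thesis x y t"
      unfolding e1 e2 e3
      using cn by auto
  qed
  show ?thesis
  proof
    assume H: "\<forall>x y. \<forall>t\<in>I.
            \<rho> t * deriv (\<lambda>s. u x y s) t
              + 3 * \<mu> * deriv (\<lambda>x'. u x' y t * v x' y t) x
              + \<sigma> * deriv (\<lambda>a. deriv (\<lambda>b. deriv (\<lambda>c. u c y t) b) a) x = 0
            \<and> deriv (\<lambda>x'. u x' y t) x = deriv (\<lambda>y'. v x y' t) y"
    obtain t0 where t0: "t0 \<in> I" using I(3) by blast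
    have cn: "root 3 (\<rho> t0) \<noteq> 0" using rho_nz t0 by simp
    show "\<forall>r y.
            3 * \<mu> * deriv (\<lambda>r'. U r' y * V r' y) r
              + \<sigma> * deriv (\<lambda>a. deriv (\<lambda>b. deriv (\<lambda>c. U c y) b) a) r = 0
            \<and> deriv (\<lambda>r'. U r' y) r - deriv (\<lambda>y'. V r y') y = 0"
    proof (intro allI)
      fix r y
      have rr: "root 3 (\<rho> t0) * (r / root 3 (\<rho> t0)) = r" using cn by simp
      have "3 * \<mu> * (U1 r y * V r y + U r y * V1 r y) + \<sigma> * U3 r y = 0
           \<and> U1 r y - Vy r y = 0"
        using key[OF t0, of "r / root 3 (\<rho> t0)" y] H t0 unfolding rr by blast
      then show "3 * \<mu> * deriv (\<lambda>r'. U r' y * V r' y) r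
              + \<sigma> * deriv (\<lambda>a. deriv (\<lambda>b. deriv (\<lambda>c. U c y) b) a) r = 0
            \<and> deriv (\<lambda>r'. U r' y) r - deriv (\<lambda>y'. V r y') y = 0"
        unfolding dUV U3e unfolding U1e Vye by linarith
    qed
  next
    assume H: "\<forall>r y.
            3 * \<mu> * deriv (\<lambda>r'. U r' y * V r' y) r
              + \<sigma> * deriv (\<lambda>a. deriv (\<lambda>b. deriv (\<lambda>c. U c y) b) a) r = 0
            \<and> deriv (\<lambda>r'. U r' y) r - deriv (\<lambda>y'. V r y') y = 0"
    show "\<forall>x y. \<forall>t\<in>I.
            \<rho> t * deriv (\<lambda>s. u x y s) t
              + 3 * \<mu> * deriv (\<lambda>x'. u x' y t * v x' y t) x
              + \<sigma> * deriv (\<lambda>a. deriv (\<lambda>b. deriv (\<lambda>c. u c y t) b) a) x = 0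
            \<and> deriv (\<lambda>x'. u x' y t) x = deriv (\<lambda>y'. v x y' t) y"
    proof (intro allI ballI)
      fix x y t assume t: "t \<in> I"
      have "3 * \<mu> * (U1 r y * V r y + U r y * V1 r y) + \<sigma> * U3 r y = 0
           \<and> U1 r y - Vy r y = 0" for r
        using spec[OF spec[OF H, of r], of y] unfolding dUV U3e unfolding U1e Vye by linarith
      then show "\<rho> t * deriv (\<lambda>s. u x y s) t
              + 3 * \<mu> * deriv (\<lambda>x'. u x' y t * v x' y t) x
              + \<sigma> * deriv (\<lambda>a. deriv (\<lambda>b. deriv (\<lambda>c. u c y t) b) a) x = 0
            \<and> deriv (\<lambda>x'. u x' y t) x = deriv (\<lambda>y'. v x y' t) y"
        using key[OF t, of x y] by blast
    qed
  qed
qed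

end
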